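(* Let $t(\varphi)$ and $s(\varphi)$ be real trigonometric polynomials with $\deg s<\deg t$, such that all roots of $t$ in the cylinder $\mathbb{C}/2\pi\mathbb{Z}$ are real. Put $r=s/t$. Then for every natural number $n$ \[ (P)\int_0^{2\pi}r^n(\varphi)\,\mathrm{d}\varphi:=\frac12\int_0^{2\pi}(r(\varphi)+i0)^n\,\mathrm{d}\varphi+\frac12\int_0^{2\pi}(r(\varphi)-i0)^n\,\mathrm{d}\varphi=0 . \]
   Context: A real trigonometric polynomial of degree $k$ is $t(\varphi)=\sum_{j=0}^k(a_j\cos j\varphi+b_j\sin j\varphi)$ with real coefficients and $(a_k,b_k)\ne(0,0)$; it extends holomorphically to $\mathbb{C}/2\pi\mathbb{Z}$, where it has $2k$ zeros counted with multiplicity. $\int(r\pm i0)^n\,\mathrm{d}\varphi$ means $\lim_{\eta\searrow0}\int_0^{2\pi}(r(\varphi)\pm i\eta)^n\,\mathrm{d}\varphi$. *)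

theory Defs
  imports "HOL-Analysis.Analysis"
begin

text \<open>Holomorphic extension to the complex plane (equivalently the cylinder C/2piZ)
 of the real trigonometric polynomial with coefficients a j, b j, j = 0..k:
 t(z) = sum_{j=0}^k (a_j cos(j z) + b_j sin(j z)).\<close>
definition trig_poly :: "nat \<Rightarrow> (nat \<Rightarrow> real) \<Rightarrow> (nat \<Rightarrow> real) \<Rightarrow> complex \<Rightarrow> complex" where
  "trig_poly k a b z =
     (\<Sum>j\<le>k. complex_of_real (a j) * cos (of_nat j * z) + complex_of_real (b j) * sin (of_nat j * z))"

definition has_trig_degree :: "nat \<Rightarrow> (nat \<Rightarrow> real) \<Rightarrow> (nat \<Rightarrow> real) \<Rightarrow> bool" where
  "has_trig_degree k a b \<longleftrightarrow> (a k, b k) \<noteq> (0, 0)"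

end

theory Submission
  imports Defs "HOL-Complex_Analysis.Complex_Analysis"
begin

definition PW :: "nat \<Rightarrow> nat \<Rightarrow> (nat \<Rightarrow> real) \<Rightarrow> (nat \<Rightarrow> real) \<Rightarrow> complex \<Rightarrow> complex" where
  "PW K m c d w = (\<Sum>j\<le>m. complex_of_real (c j) * ((w^(K+j) + w^(K-j))/2)
      + complex_of_real (d j) * ((w^(K+j) - w^(K-j))/(2*\<i>)))"

definition QW :: "nat \<Rightarrow> nat \<Rightarrow> (nat \<Rightarrow> real) \<Rightarrow> (nat \<Rightarrow> real) \<Rightarrow> complex \<Rightarrow> complex" where
  "QW K m c d w = (\<Sum>j\<le>m. complex_of_real (c j) * ((w^(K+j-1) + w^(K-j-1))/2)
      + complex_of_real (d j) * ((w^(K+j-1) - w^(K-j-1))/(2*\<i>)))"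

lemma trig_PW:
  assumes "m \<le> K"
  shows "trig_poly m c d z * exp (\<i>*z) ^ K = PW K m c d (exp (\<i>*z))"
proof -
  define w where "w = exp (\<i>*z)"
  have w0: "w \<noteq> 0" by (simp add: w_def)
  have e1: "exp (\<i> * (of_nat j * z)) = w ^ j" for j
    by (simp add: w_def flip: exp_of_nat_mult) (simp add: algebra_simps)
  have e2: "exp (-(\<i> * (of_nat j * z))) = inverse w ^ j" for j
  proof -
    have "exp (-(\<i> * (of_nat j * z))) = exp (of_nat j * (-(\<i>*z)))" by (simp add: algebra_simps)
    also have "\<dots> = exp (-(\<i>*z)) ^ j" by (rule exp_of_nat_mult)
    finally show ?thesis by (simp add: w_def exp_minus)
  qed
  have p: "inverse w ^ j * w ^ K = w ^ (K - j)" if "j \<le> K" for j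
  proof -
    have "w ^ K = w ^ (K-j) * w ^ j" using that by (simp flip: power_add)
    thus ?thesis using w0 by (simp add: power_inverse field_simps)
  qed
  have "trig_poly m c d z * w ^ K = PW K m c d w"
    unfolding trig_poly_def PW_def sum_distrib_right
  proof (rule sum.cong[OF refl])
    fix j assume "j \<in> {..m}"
    hence jK: "j \<le> K" using assms by auto
    show "(complex_of_real (c j) * cos (of_nat j * z) + complex_of_real (d j) * sin (of_nat j * z)) * w ^ K =
        complex_of_real (c j) * ((w ^ (K + j) + w ^ (K - j)) / 2) + complex_of_real (d j) * ((w ^ (K + j) - w ^ (K - j)) / (2 * \<i>))"
    proof -
      have g: "(C*((x+y)/2) + D*((x-y)/(2*\<i>)))*W = C*((x*W+y*W)/2) + D*((x*W-y*W)/(2*\<i>))"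
        for C D x y W :: complex by (simp add: field_simps)
      have "w^j * w^K = w^(K+j)" by (simp add: power_add)
      thus ?thesis unfolding cos_exp_eq sin_exp_eq e1 e2 g p[OF jK] by simp
    qed
  qed
  thus ?thesis by (simp add: w_def)
qed

lemma PW_QW:
  assumes "m < K"
  shows "PW K m c d w = w * QW K m c d w"
  unfolding PW_def QW_def sum_distrib_left
proof (rule sum.cong[OF refl])
  fix j assume "j \<in> {..m}"
  hence j: "j < K" using assms by auto
  have a: "w^(K+j) = w * w^(K+j-1)" using j by (simp flip: power_Suc)
  have b: "w^(K-j) = w * w^(K-j-1)" using j by (simp flip: power_Suc add: Suc_diff_Suc)
  show "complex_of_real (c j) * ((w ^ (K + j) + w ^ (K - j)) / 2) + complex_of_real (d j) * ((w ^ (K + j) - w ^ (K - j)) / (2 * \<i>)) =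
         w * (complex_of_real (c j) * ((w ^ (K + j - 1) + w ^ (K - j - 1)) / 2) + complex_of_real (d j) * ((w ^ (K + j - 1) - w ^ (K - j - 1)) / (2 * \<i>)))"
    unfolding a b by (simp add: field_simps)
qed

lemma PW_0:
  assumes "k \<ge> 1" "(a k, b k) \<noteq> (0,0)"
  shows "PW k k a b 0 \<noteq> 0"
proof -
  have "PW k k a b 0 = (\<Sum>j\<le>k. if j = k then complex_of_real (a k)/2 - complex_of_real (b k)/(2*\<i>) else 0)"
    unfolding PW_def
    by (rule sum.cong[OF refl]) (use assms(1) in \<open>auto simp: zero_power\<close>)
  also have "\<dots> = complex_of_real (a k)/2 - complex_of_real (b k)/(2*\<i>)" by simp
  also have "\<dots> = Complex (a k/2) (b k/2)" by (simp add: complex_eq_iff)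
  finally show ?thesis using assms(2) by (auto simp: complex_eq_iff)
qed

lemma PW_holo: "PW K m c d holomorphic_on A"
  unfolding PW_def[abs_def] by (intro holomorphic_intros) auto

lemma QW_holo: "QW K m c d holomorphic_on A"
  unfolding QW_def[abs_def] by (intro holomorphic_intros) auto

lemma trig_cnj: "trig_poly m c d (cnj z) = cnj (trig_poly m c d z)"
  unfolding trig_poly_def by (simp add: cnj_cos cnj_sin)

theorem lemma6:
  fixes k m :: nat and a b c d :: "nat \<Rightarrow> real" and n :: nat
  defines "T \<equiv> trig_poly k a b"
      and "S \<equiv> trig_poly m c d"
  assumes deg_t: "has_trig_degree k a b"
      and deg_s: "has_trig_degree m c d"
      and deg_lt: "m < k"
      and real_roots: "\<forall>z. T z = 0 \<longrightarrow> Im z = 0"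
      and n_pos: "n \<ge> 1"
  shows "\<exists>Ip Iq Lp Lm.
           (\<forall>\<^sub>F \<eta> in at_right 0.
              ((\<lambda>\<phi>. (S (complex_of_real \<phi> + \<i> * complex_of_real \<eta>) / T (complex_of_real \<phi> + \<i> * complex_of_real \<eta>)) ^ n) has_integral Ip \<eta>) {0..2*pi})
         \<and> (\<forall>\<^sub>F \<eta> in at_right 0.
              ((\<lambda>\<phi>. (S (complex_of_real \<phi> - \<i> * complex_of_real \<eta>) / T (complex_of_real \<phi> - \<i> * complex_of_real \<eta>)) ^ n) has_integral Iq \<eta>) {0..2*pi})
         \<and> (Ip \<longlongrightarrow> Lp) (at_right 0)
         \<and> (Iq \<longlongrightarrow> Lm) (at_right 0)
         \<and> Lp / 2 + Lm / 2 = 0"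
proof -
  have k1: "k \<ge> 1" using deg_lt by simp
  define PT where "PT = PW k k a b"
  define QS where "QS = QW k m c d"
  define h where "h = (\<lambda>w. w^(n-1) * QS w ^ n / PT w ^ n)"
  define F where "F = (\<lambda>\<eta> \<phi>. (S (complex_of_real \<phi> + \<i> * complex_of_real \<eta>) / T (complex_of_real \<phi> + \<i> * complex_of_real \<eta>)) ^ n)"
  have key: "(S z / T z)^n = exp(\<i>*z) * h (exp(\<i>*z))" for z
  proof -
    define w where "w = exp(\<i>*z)"
    have w0: "w \<noteq> 0" by (simp add: w_def)
    have "S z / T z = (S z * w^k)/(T z * w^k)" using w0 by simp
    also have "\<dots> = PW k m c d w / PT w" unfolding S_def T_def PT_def w_def using deg_lt by (simp add: trig_PW)
    also have "\<dots> = w * QS w / PT w" unfolding QS_def using deg_lt by (simp add: PW_QW)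
    finally have "(S z / T z)^n = w^n * QS w^n / PT w^n" by (simp add: power_mult_distrib power_divide)
    also have "\<dots> = w * h w" unfolding h_def using n_pos by (cases n) auto
    finally show ?thesis by (simp add: w_def)
  qed
  have PTnz: "PT w \<noteq> 0" if "w \<in> ball 0 1" for w
  proof (cases "w = 0")
    case True then show ?thesis using PW_0[of k a b, OF k1 deg_t[unfolded has_trig_degree_def]] by (simp add: PT_def)
  next
    case False
    define z where "z = - \<i> * Ln w"
    have ez: "exp(\<i>*z) = w" using False by (simp add: z_def)
    have "Im z = - Re (Ln w)" by (simp add: z_def)
    also have "\<dots> = - ln (norm w)" using False by (simp add: Re_Ln)
    finally have "Im z > 0" using that False by simp
    hence "T z \<noteq> 0" using real_roots by auto
    moreover have "T z * exp(\<i>*z)^k = PT (exp(\<i>*z))" unfolding T_def PT_def by (simp add: trig_PW)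
    ultimately show ?thesis using ez False by auto
  qed
  have hPT: "PT holomorphic_on A" for A unfolding PT_def by (rule PW_holo)
  have hQS: "QS holomorphic_on A" for A unfolding QS_def by (rule QW_holo)
  have holo: "h holomorphic_on ball 0 1"
    unfolding h_def by (intro holomorphic_intros hPT hQS) (use PTnz in auto)
  have plus: "((F \<eta>) has_integral 0) {0..2*pi}" if "\<eta> > 0" for \<eta>
  proof -
    define r where "r = exp(-\<eta>)"
    have r: "0 < r" "r < 1" using that by (auto simp: r_def)
    have "(h has_contour_integral 0) (circlepath 0 r)"
      by (rule Cauchy_theorem_disc_simple[OF holo]) (use r in auto)
    hence "((\<lambda>t. h (circlepath 0 r t) * vector_derivative (circlepath 0 r) (at t within {0..1})) has_integral 0) {0..1}"
      by (simp add: has_contour_integral_def)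
    moreover have "h (circlepath 0 r t) * vector_derivative (circlepath 0 r) (at t within {0..1})
        = (2*pi*\<i>) * F \<eta> (2*pi*t)" if t: "t \<in> {0..1}" for t
    proof -
      have e: "exp(\<i> * (complex_of_real (2*pi*t) + \<i> * complex_of_real \<eta>)) = complex_of_real r * exp(2 * of_real pi * \<i> * of_real t)"
        by (simp add: r_def exp_of_real[symmetric] exp_add[symmetric] algebra_simps)
      have "h (circlepath 0 r t) * vector_derivative (circlepath 0 r) (at t within {0..1})
          = (2*pi*\<i>) * (complex_of_real r * exp(2 * of_real pi * \<i> * of_real t) * h (complex_of_real r * exp(2 * of_real pi * \<i> * of_real t)))"
      proof -
        have vd: "vector_derivative (circlepath 0 r) (at t within {0..1}) = 2 * pi * \<i> * r * exp(2 * of_real pi * \<i> * t)"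
          using t by (simp add: vector_derivative_circlepath01)
        have cp: "circlepath 0 r t = complex_of_real r * exp(2 * of_real pi * \<i> * of_real t)"
          by (simp add: circlepath)
        show ?thesis unfolding vd cp by (simp add: algebra_simps)
      qed
      also have "\<dots> = (2*pi*\<i>) * F \<eta> (2*pi*t)"
        unfolding F_def key e[symmetric] by simp
      finally show ?thesis .
    qed
    ultimately have "((\<lambda>t. (2*pi*\<i>) * F \<eta> (2*pi*t)) has_integral 0) {0..1}"
      using has_integral_cong by (metis (no_types, lifting))
    hence i1: "((\<lambda>t. F \<eta> (2*pi*t)) has_integral 0) {0..1}"
      by (subst (asm) has_integral_mult_right_iff) auto
    have img: "(\<lambda>x. x/(2*pi)) ` {0..2*pi} = {0..1}"
    proof
      show "(\<lambda>x. x/(2*pi)) ` {0..2*pi} \<subseteq> {0..1}" by auto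
      show "{0..1} \<subseteq> (\<lambda>x. x/(2*pi)) ` {0..2*pi}"
      proof
        fix x :: real assume "x \<in> {0..1}"
        thus "x \<in> (\<lambda>x. x/(2*pi)) ` {0..2*pi}"
          by (intro image_eqI[of _ _ "2*pi*x"]) auto
      qed
    qed
    have "((\<lambda>x. F \<eta> (2*pi*x)) has_integral 0) ((\<lambda>x. x/(2*pi)) ` {0..2*pi})"
      using i1 img by simp
    hence "(F \<eta> has_integral (\<bar>2*pi\<bar> *\<^sub>R 0)) {0..2*pi}"
      by (subst (asm) has_integral_stretch_real_iff) auto
    thus ?thesis by simp
  qed
  have minus: "((\<lambda>\<phi>. (S (complex_of_real \<phi> - \<i> * complex_of_real \<eta>) / T (complex_of_real \<phi> - \<i> * complex_of_real \<eta>)) ^ n) has_integral 0) {0..2*pi}"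
    if "\<eta> > 0" for \<eta>
  proof -
    have "(cnj \<circ> F \<eta> has_integral cnj 0) {0..2*pi}"
      using plus[OF that] by (subst has_integral_cnj)
    moreover have "cnj \<circ> F \<eta> = (\<lambda>\<phi>. (S (complex_of_real \<phi> - \<i> * complex_of_real \<eta>) / T (complex_of_real \<phi> - \<i> * complex_of_real \<eta>)) ^ n)"
    proof
      fix \<phi>
      have c: "complex_of_real \<phi> - \<i> * complex_of_real \<eta> = cnj (complex_of_real \<phi> + \<i> * complex_of_real \<eta>)"
        by (simp add: complex_eq_iff)
      show "(cnj \<circ> F \<eta>) \<phi> = (S (complex_of_real \<phi> - \<i> * complex_of_real \<eta>) / T (complex_of_real \<phi> - \<i> * complex_of_real \<eta>)) ^ n"
        unfolding c S_def T_def trig_cnj F_def by simp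
    qed
    ultimately show ?thesis by simp
  qed
  show ?thesis
    apply (rule exI[of _ "\<lambda>_. 0"], rule exI[of _ "\<lambda>_. 0"], rule exI[of _ 0], rule exI[of _ 0])
    using plus minus by (auto simp: F_def intro!: eventually_mono[OF eventually_at_right_less])
qed

end
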